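(* Let $n\in\mathbb{N}_0$ and $r\in\mathbb{N}$, let $I$ be an open interval, and let $f_i,g_i:I\to\mathbb{R}$ ($i=1,\ldots,r$) be functions which have a derivative of order $n$ on $I$. Suppose that $\sum_{i=1}^{r}g_i=0$ on $I$. Then, for every $\mathbf{s}=(s_1,\ldots,s_r)\in(\mathbb{Z}_{\ge 0})^r$ with $|\mathbf{s}|\le n$, \[ \sum_{|\mathbf{k}|=n}\binom{n}{\mathbf{k}}\prod_{i=1}^{r}\left(f_i g_i^{k_i}\right)^{(s_i)}= \begin{cases} 0, & |\mathbf{s}|<n,\\[2mm] n!\left(\prod_{i=1}^{r}f_i\right)\prod_{i=1}^{r}\left(g_i'\right)^{s_i}, & |\mathbf{s}|=n. \end{cases} \]
   Context: For $\mathbf{k}=(k_1,\ldots,k_r)\in\mathbb{Z}^r$, $|\mathbf{k}|=k_1+\cdots+k_r$. The sum $\sum_{|\mathbf{k}|=n}$ runs over all $\mathbf{k}\in(\mathbb{Z}_{\ge0})^r$ with $|\mathbf{k}|=n$, and $\binom{n}{\mathbf{k}}=\frac{n!}{k_1!\cdots k_r!\,(n-|\mathbf{k}|)!}$, which for $|\mathbf{k}|=n$ is the multinomial coefficient $\frac{n!}{k_1!\cdots k_r!}$. $h^{(s)}$ denotes the $s$-th derivative of $h$ (with $h^{(0)}=h$), and $g^0=1$. *)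

theory Defs
  imports "HOL-Analysis.Analysis"
begin

definition has_deriv_of_order_on :: "nat \<Rightarrow> (real \<Rightarrow> real) \<Rightarrow> real set \<Rightarrow> bool" where
  "has_deriv_of_order_on n h I \<longleftrightarrow> (\<forall>m<n. \<forall>x\<in>I. ((deriv ^^ m) h) differentiable (at x))"

text \<open>Multi-indices k = (k_0,...,k_{r-1}) in (Z_{>=0})^r with |k| = n
  (represented as functions vanishing outside {..<r}).\<close>
definition multi_indices :: "nat \<Rightarrow> nat \<Rightarrow> (nat \<Rightarrow> nat) set" where
  "multi_indices r n = {k. (\<forall>i. r \<le> i \<longrightarrow> k i = 0) \<and> (\<Sum>i<r. k i) = n}"

definition multinom :: "nat \<Rightarrow> nat \<Rightarrow> (nat \<Rightarrow> nat) \<Rightarrow> nat" where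
  "multinom n r k = fact n div ((\<Prod>i<r. fact (k i)) * fact (n - (\<Sum>i<r. k i)))"

end

theory Submission imports Defs "HOL-Computational_Algebra.Formal_Power_Series" begin


abbreviation CC where "CC j h I \<equiv> has_deriv_of_order_on j h I"

lemma agree_deriv:
  assumes "open I" "\<forall>y\<in>I. u y = v y" "y \<in> I"
  shows "deriv u y = deriv v y"
proof (rule deriv_cong_ev[OF _ refl])
  show "\<forall>\<^sub>F x in nhds y. u x = v x"
    using eventually_nhds_in_open[OF assms(1) assms(3)] assms(2)
    by (auto elim: eventually_mono)
qed

lemma agree_derivs:
  assumes "open I" "\<forall>y\<in>I. u y = v y"
  shows "\<forall>y\<in>I. (deriv ^^ m) u y = (deriv ^^ m) v y"
  using assms by (induction m) (auto intro: agree_deriv)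

lemma differentiable_transfer:
  assumes "open I" "\<forall>y\<in>I. u y = v y" "y \<in> I" "u differentiable (at y)"
  shows "v differentiable (at y)"
  using assms unfolding differentiable_def
  using has_derivative_transform_within_open by blast

lemma CC_transfer:
  assumes "open I" "\<forall>y\<in>I. u y = v y" "CC j u I"
  shows "CC j v I"
  using assms agree_derivs[OF assms(1,2)] differentiable_transfer[OF assms(1)]
  unfolding has_deriv_of_order_on_def by blast

lemma CC_mono: "CC j h I \<Longrightarrow> i \<le> j \<Longrightarrow> CC i h I"
  unfolding has_deriv_of_order_on_def by auto

lemma CC_deriv: "CC (Suc j) h I \<Longrightarrow> CC j (deriv h) I"
  unfolding has_deriv_of_order_on_def
  by (metis Suc_mono funpow_Suc_right o_apply)

lemma CC_diff: "CC (Suc j) h I \<Longrightarrow> y \<in> I \<Longrightarrow> h differentiable (at y)"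
  unfolding has_deriv_of_order_on_def by (metis funpow_0 zero_less_Suc)

lemma CC_SucI:
  assumes "\<forall>y\<in>I. h differentiable (at y)" "CC j (deriv h) I"
  shows "CC (Suc j) h I"
  unfolding has_deriv_of_order_on_def
proof (intro allI impI ballI)
  fix m y assume "m < Suc j" "y \<in> I"
  then show "(deriv ^^ m) h differentiable at y"
    using assms unfolding has_deriv_of_order_on_def
    by (cases m) (auto simp: funpow_Suc_right simp del: funpow.simps)
qed

lemma CC_zero: "CC j (\<lambda>_. 0) I"
proof -
  have "(deriv ^^ m) (\<lambda>_. 0::real) = (\<lambda>_. 0)" for m by (induction m) auto
  then show ?thesis unfolding has_deriv_of_order_on_def by simp
qed

lemma CC_add:
  assumes "open I" "CC j u I" "CC j v I"
  shows "CC j (\<lambda>y. u y + v y) I"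
  using assms(2,3)
proof (induction j arbitrary: u v)
  case 0 then show ?case by (simp add: has_deriv_of_order_on_def)
next
  case (Suc j)
  have d: "\<forall>y\<in>I. deriv (\<lambda>y. u y + v y) y = deriv u y + deriv v y"
    using Suc.prems CC_diff by (auto intro!: DERIV_imp_deriv derivative_eq_intros
        simp: DERIV_deriv_iff_real_differentiable)
  have "CC j (\<lambda>y. deriv u y + deriv v y) I"
    using Suc CC_deriv by blast
  then have "CC j (deriv (\<lambda>y. u y + v y)) I"
    using CC_transfer[OF assms(1)] d by (metis (no_types, lifting))
  then show ?case
    using Suc.prems CC_diff by (intro CC_SucI) auto
qed

lemma CC_mult:
  assumes "open I" "CC j u I" "CC j v I"
  shows "CC j (\<lambda>y. u y * v y) I"
  using assms(2,3)
proof (induction j arbitrary: u v)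
  case 0 then show ?case by (simp add: has_deriv_of_order_on_def)
next
  case (Suc j)
  have d: "\<forall>y\<in>I. deriv (\<lambda>y. u y * v y) y = deriv u y * v y + u y * deriv v y"
  proof
    fix y assume y: "y \<in> I"
    have "(u has_real_derivative deriv u y) (at y)" "(v has_real_derivative deriv v y) (at y)"
      using Suc.prems CC_diff y by (auto simp: DERIV_deriv_iff_real_differentiable)
    from DERIV_mult[OF this] show "deriv (\<lambda>y. u y * v y) y = deriv u y * v y + u y * deriv v y"
      by (intro DERIV_imp_deriv) (simp add: algebra_simps)
  qed
  have "CC j (\<lambda>y. deriv u y * v y + u y * deriv v y) I"
    using Suc CC_deriv CC_mono CC_add[OF assms(1)] by (meson le_SucI order_refl)
  then have "CC j (deriv (\<lambda>y. u y * v y)) I"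
    using CC_transfer[OF assms(1)] d by (metis (no_types, lifting))
  then show ?case
    using Suc.prems CC_diff by (intro CC_SucI) auto
qed

fun bb :: "(real \<Rightarrow> real) \<Rightarrow> (real \<Rightarrow> real) \<Rightarrow> nat \<Rightarrow> nat \<Rightarrow> real \<Rightarrow> real" where
  "bb f g 0 m = (if m = 0 then f else (\<lambda>_. 0))"
| "bb f g (Suc s) 0 = deriv (bb f g s 0)"
| "bb f g (Suc s) (Suc m) = (\<lambda>y. deriv (bb f g s (Suc m)) y + deriv g y * bb f g s m y)"

lemma bb_zero: "m > s \<Longrightarrow> bb f g s m = (\<lambda>_. 0)"
proof (induction s arbitrary: m)
  case 0 then show ?case by simp
next
  case (Suc s)
  then obtain m' where "m = Suc m'" by (cases m) auto
  with Suc show ?case by simp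
qed

lemma bb_top: "bb f g s s y = f y * deriv g y ^ s"
  by (induction s arbitrary: y) (auto simp: bb_zero)

lemma CC_bb:
  assumes "open I" "CC n f I" "CC n g I" "s \<le> n"
  shows "CC (n - s) (bb f g s m) I"
  using assms(4)
proof (induction s arbitrary: m)
  case 0 then show ?case using assms CC_zero by simp
next
  case (Suc s)
  have n: "n - s = Suc (n - Suc s)" using Suc.prems by simp
  have dg: "CC (n - Suc s) (deriv g) I"
    using CC_deriv[of "n - 1" g] assms(3) Suc.prems
    by (metis CC_mono Suc_pred diff_le_mono2 le_zero_eq less_Suc_eq_0_disj nat.simps(3) not_less_eq_eq plus_1_eq_Suc add_diff_cancel_left' diff_Suc_1 Suc_le_lessD gr0_implies_Suc)
  show ?case
  proof (cases m)
    case 0 then show ?thesis using Suc CC_deriv n by auto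
  next
    case (Suc m')
    have "CC (n - Suc s) (deriv (bb f g s m)) I" using Suc.IH Suc.prems CC_deriv n by auto
    moreover have "CC (n - Suc s) (bb f g s m') I"
      using Suc.IH Suc.prems CC_mono by (metis diff_le_mono2 le_SucI order_refl Suc_leD)
    ultimately show ?thesis using Suc CC_add[OF assms(1)] CC_mult[OF assms(1)] dg by simp
  qed
qed

definition fall :: "nat \<Rightarrow> nat \<Rightarrow> real" where "fall k m = (\<Prod>i<m. real (k - i))"

lemma fall_Suc: "fall k (Suc m) = fall k m * real (k - m)"
  by (simp add: fall_def)

lemma deriv_main:
  assumes "open I" "CC n f I" "CC n g I" "s \<le> n"
  shows "\<forall>y\<in>I. (deriv ^^ s) (\<lambda>y. f y * g y ^ k) y
      = (\<Sum>m\<le>s. fall k m * (g y ^ (k - m) * bb f g s m y))"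
  using assms(4)
proof (induction s)
  case 0 then show ?case by (simp add: fall_def)
next
  case (Suc s)
  show ?case
  proof
    fix y assume y: "y \<in> I"
    have sn: "s < n" using Suc.prems by simp
    have diffb: "(bb f g s m has_real_derivative deriv (bb f g s m) y) (at y)" for m
      using CC_bb[OF assms(1,2,3), of s m] sn CC_diff[of "n - s - 1" "bb f g s m" I y] y
      by (simp add: DERIV_deriv_iff_real_differentiable Suc_diff_Suc)
    have diffg: "(g has_real_derivative deriv g y) (at y)"
      using assms(3) sn CC_diff[of "n - 1" g I y] y
      by (simp add: DERIV_deriv_iff_real_differentiable)
    have "(deriv ^^ Suc s) (\<lambda>y. f y * g y ^ k) y
        = deriv (\<lambda>y. \<Sum>m\<le>s. fall k m * (g y ^ (k - m) * bb f g s m y)) y"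
      using agree_deriv[OF assms(1) _ y] Suc by simp
    also have "\<dots> = (\<Sum>m\<le>s. fall k m * (g y ^ (k - m) * deriv (bb f g s m) y
                 + (real (k - m) * g y ^ (k - m - 1) * deriv g y) * bb f g s m y))"
    proof (rule DERIV_imp_deriv, rule DERIV_sum)
      fix m
      have c: "((\<lambda>y. g y ^ (k - m)) has_real_derivative real (k - m) * g y ^ (k - m - 1) * deriv g y) (at y)"
        using DERIV_chain2[OF DERIV_pow diffg, of "k - m"] by simp
      show "((\<lambda>y. fall k m * (g y ^ (k - m) * bb f g s m y)) has_real_derivative
          fall k m * (g y ^ (k - m) * deriv (bb f g s m) y
                 + (real (k - m) * g y ^ (k - m - 1) * deriv g y) * bb f g s m y)) (at y)"
        by (rule DERIV_cmult[OF DERIV_mult'[OF c diffb]])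
    qed
    also have "\<dots> = (\<Sum>m\<le>s. fall k (Suc m) * g y ^ (k - Suc m) * deriv g y * bb f g s m y)
                   + (\<Sum>m\<le>s. fall k m * g y ^ (k - m) * deriv (bb f g s m) y)"
      unfolding sum.distrib[symmetric]
    proof (intro sum.cong refl)
      fix m
      have "k - m - 1 = k - Suc m" by simp
      then show "fall k m * (g y ^ (k - m) * deriv (bb f g s m) y
                 + (real (k - m) * g y ^ (k - m - 1) * deriv g y) * bb f g s m y)
         = fall k (Suc m) * g y ^ (k - Suc m) * deriv g y * bb f g s m y
              + fall k m * g y ^ (k - m) * deriv (bb f g s m) y"
        unfolding fall_Suc by (simp only: ring_distribs mult_ac add_ac)
    qed
    also have "(\<Sum>m\<le>s. fall k m * g y ^ (k - m) * deriv (bb f g s m) y)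
        = (\<Sum>m\<le>Suc s. fall k m * g y ^ (k - m) * deriv (bb f g s m) y)"
      by (simp add: bb_zero)
    also have "\<dots> = g y ^ k * deriv (bb f g s 0) y + (\<Sum>m\<le>s. fall k (Suc m) * g y ^ (k - Suc m) * deriv (bb f g s (Suc m)) y)"
      by (subst sum.atMost_Suc_shift) (simp add: fall_def)
    finally have L: "(deriv ^^ Suc s) (\<lambda>y. f y * g y ^ k) y =
       (\<Sum>m\<le>s. fall k (Suc m) * g y ^ (k - Suc m) * deriv g y * bb f g s m y) +
       (g y ^ k * deriv (bb f g s 0) y + (\<Sum>m\<le>s. fall k (Suc m) * g y ^ (k - Suc m) * deriv (bb f g s (Suc m)) y))" .
    have R: "(\<Sum>m\<le>Suc s. fall k m * (g y ^ (k - m) * bb f g (Suc s) m y))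
        = g y ^ k * deriv (bb f g s 0) y + (\<Sum>m\<le>s. fall k (Suc m) * (g y ^ (k - Suc m) * bb f g (Suc s) (Suc m) y))"
      by (subst sum.atMost_Suc_shift) (simp add: fall_def)
    have R2: "(\<Sum>m\<le>s. fall k (Suc m) * (g y ^ (k - Suc m) * bb f g (Suc s) (Suc m) y))
       = (\<Sum>m\<le>s. fall k (Suc m) * g y ^ (k - Suc m) * deriv g y * bb f g s m y) +
         (\<Sum>m\<le>s. fall k (Suc m) * g y ^ (k - Suc m) * deriv (bb f g s (Suc m)) y)"
      unfolding sum.distrib[symmetric] by (intro sum.cong refl) (simp only: bb.simps ring_distribs mult_ac add_ac)
    show "(deriv ^^ Suc s) (\<lambda>y. f y * g y ^ k) y = (\<Sum>m\<le>Suc s. fall k m * (g y ^ (k - m) * bb f g (Suc s) m y))"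
      unfolding L R R2 by (simp only: add_ac)
  qed
qed


unbundle no vec_syntax
notation fps_nth (infixl \<open>$\<close> 75)

lemma mi_0: "multi_indices 0 n = (if n = 0 then {\<lambda>_. 0} else {})"
  by (auto simp: multi_indices_def)

lemma mi_Suc_sum:
  fixes h :: "(nat \<Rightarrow> nat) \<Rightarrow> 'a::comm_monoid_add"
  shows "(\<Sum>k\<in>multi_indices (Suc r) n. h k)
    = (\<Sum>(j,k)\<in>(SIGMA j:{..n}. multi_indices r j). h (k(r := n - j)))"
proof (rule sum.reindex_bij_witness[symmetric, where j = "\<lambda>(j,k). k(r := n - j)"
      and i = "\<lambda>k. (n - k r, k(r := 0))"])
  fix a assume a: "a \<in> (SIGMA j:{..n}. multi_indices r j)"
  then obtain j k where [simp]: "a = (j, k)" and j: "j \<le> n" and k: "k \<in> multi_indices r j" by auto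
  have kr: "k r = 0" using k by (simp add: multi_indices_def)
  show "(\<lambda>k. (n - k r, k(r := 0))) ((\<lambda>(j,k). k(r := n - j)) a) = a"
    using j kr by (auto simp: fun_eq_iff)
  have "(\<Sum>i<r. (k(r := n - j)) i) = (\<Sum>i<r. k i)" by (intro sum.cong) auto
  then show "(\<lambda>(j,k). k(r := n - j)) a \<in> multi_indices (Suc r) n"
    using k j by (auto simp: multi_indices_def)
  show "h ((\<lambda>(j,k). k(r := n - j)) a) = (case a of (j, k) \<Rightarrow> h (k(r := n - j)))" by simp
next
  fix b assume b: "b \<in> multi_indices (Suc r) n"
  then have s: "(\<Sum>i<r. b i) + b r = n" and z: "\<forall>i. Suc r \<le> i \<longrightarrow> b i = 0"
    by (auto simp: multi_indices_def)
  show "(\<lambda>(j,k). k(r := n - j)) ((\<lambda>k. (n - k r, k(r := 0))) b) = b"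
    using s by (auto simp: fun_eq_iff)
  have "(\<Sum>i<r. (b(r := 0)) i) = (\<Sum>i<r. b i)" by (intro sum.cong) auto
  then show "(\<lambda>k. (n - k r, k(r := 0))) b \<in> (SIGMA j:{..n}. multi_indices r j)"
    using s z by (auto simp: multi_indices_def)
qed

lemma mi_upd1: "j \<le> n \<Longrightarrow> k \<in> multi_indices r j \<Longrightarrow> k(r := n - j) \<in> multi_indices (Suc r) n"
proof -
  assume k: "k \<in> multi_indices r j" and j: "j \<le> n"
  have "(\<Sum>i<r. (k(r := n - j)) i) = (\<Sum>i<r. k i)" by (intro sum.cong) auto
  then show ?thesis using k j by (auto simp: multi_indices_def)
qed

lemma mi_upd2: "b \<in> multi_indices (Suc r) n \<Longrightarrow> b r \<le> n \<and> b(r := 0) \<in> multi_indices r (n - b r)"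
proof -
  assume b: "b \<in> multi_indices (Suc r) n"
  then have s: "(\<Sum>i<r. b i) + b r = n" and z: "\<forall>i. Suc r \<le> i \<longrightarrow> b i = 0"
    by (auto simp: multi_indices_def)
  have "(\<Sum>i<r. (b(r := 0)) i) = (\<Sum>i<r. b i)" by (intro sum.cong) auto
  then show ?thesis using s z by (auto simp: multi_indices_def)
qed

lemma mi_finite: "finite (multi_indices r n)"
proof (induction r arbitrary: n)
  case 0 then show ?case by (simp add: mi_0)
next
  case (Suc r)
  have "multi_indices (Suc r) n \<subseteq> (\<lambda>(j,k). k(r := n - j)) ` (SIGMA j:{..n}. multi_indices r j)"
  proof
    fix b assume b: "b \<in> multi_indices (Suc r) n"
    note m = mi_upd2[OF b]
    have "b = (\<lambda>(j,k). k(r := n - j)) (n - b r, b(r := 0))" using m by (auto simp: fun_eq_iff)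
    moreover have "(n - b r, b(r := 0)) \<in> (SIGMA j:{..n}. multi_indices r j)" using m by auto
    ultimately show "b \<in> (\<lambda>(j,k). k(r := n - j)) ` (SIGMA j:{..n}. multi_indices r j)" by blast
  qed
  moreover have "finite (SIGMA j:{..n}. multi_indices r j)" using Suc by auto
  ultimately show ?case using finite_surj by blast
qed

lemma fps_prod_nth:
  fixes F :: "nat \<Rightarrow> 'a::comm_ring_1 fps"
  shows "(\<Prod>i<r. F i) $ n = (\<Sum>k\<in>multi_indices r n. \<Prod>i<r. F i $ k i)"
proof (induction r arbitrary: n)
  case 0 then show ?case by (simp add: mi_0)
next
  case (Suc r)
  have "(\<Prod>i<Suc r. F i) $ n = (\<Sum>j=0..n. (\<Prod>i<r. F i) $ j * F r $ (n - j))"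
    by (simp add: fps_mult_nth)
  also have "\<dots> = (\<Sum>j\<le>n. \<Sum>k\<in>multi_indices r j. (\<Prod>i<r. F i $ k i) * F r $ (n - j))"
    by (simp add: Suc sum_distrib_right atLeast0AtMost)
  also have "\<dots> = (\<Sum>(j,k)\<in>(SIGMA j:{..n}. multi_indices r j). (\<Prod>i<r. F i $ k i) * F r $ (n - j))"
    by (rule sum.Sigma) (auto simp: mi_finite)
  also have "\<dots> = (\<Sum>(j,k)\<in>(SIGMA j:{..n}. multi_indices r j). \<Prod>i<Suc r. F i $ (k(r := n - j)) i)"
  proof (intro sum.cong refl, clarify)
    fix j k assume "k \<in> multi_indices r j"
    have "(\<Prod>i<r. F i $ (k(r := n - j)) i) = (\<Prod>i<r. F i $ k i)" by (intro prod.cong) auto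
    then show "(\<Prod>i<r. F i $ k i) * F r $ (n - j) = (\<Prod>i<Suc r. F i $ (k(r := n - j)) i)" by simp
  qed
  also have "\<dots> = (\<Sum>k\<in>multi_indices (Suc r) n. \<Prod>i<Suc r. F i $ k i)"
    by (rule mi_Suc_sum[symmetric])
  finally show ?case .
qed

lemma fact_prod_dvd: "(\<Prod>i<(r::nat). fact (k i)) dvd (fact (\<Sum>i<r. k i) :: nat)"
proof (induction r)
  case 0 then show ?case by simp
next
  case (Suc r)
  let ?S = "\<Sum>i<r. k i"
  have "(fact ?S * fact (k r) :: nat) dvd fact (?S + k r)"
    using binomial_fact_lemma[of "k r" "?S + k r"] by (metis add_diff_cancel_right' dvd_triv_left le_add2 mult.commute)
  moreover have "(\<Prod>i<r. fact (k i)) * fact (k r) dvd (fact ?S * fact (k r) :: nat)"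
    using Suc by (simp add: mult_dvd_mono)
  ultimately show ?case by (simp only: prod.lessThan_Suc sum.lessThan_Suc) (meson dvd_trans)
qed

lemma multinom_real:
  assumes "k \<in> multi_indices r n"
  shows "real (multinom n r k) = fact n / (\<Prod>i<r. fact (k i))"
proof -
  have s: "(\<Sum>i<r. k i) = n" using assms by (simp add: multi_indices_def)
  have "real (fact n div (\<Prod>i<r. fact (k i))) = real (fact n) / real (\<Prod>i<r. fact (k i))"
    by (rule real_of_nat_div) (metis fact_prod_dvd s)
  then show ?thesis by (simp add: multinom_def s)
qed

lemma fps_exp_prod: "(\<Prod>i<(r::nat). fps_exp (G i)) = fps_exp (\<Sum>i<r. G i :: real)"
  by (induction r) (simp_all add: fps_exp_add_mult)

lemma prod_poly:
  fixes B :: "nat \<Rightarrow> nat \<Rightarrow> real"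
  assumes "\<forall>i<r. \<forall>m. m > s i \<longrightarrow> B i m = 0"
  shows "(\<forall>N>(\<Sum>i<r. s i). (\<Prod>i<r. Abs_fps (B i)) $ N = 0)
     \<and> (\<Prod>i<r. Abs_fps (B i)) $ (\<Sum>i<r. s i) = (\<Prod>i<r. B i (s i))"
  using assms
proof (induction r)
  case 0 then show ?case by simp
next
  case (Suc r)
  let ?Y = "\<Prod>i<r. Abs_fps (B i)" and ?S = "\<Sum>i<r. s i"
  have IH1: "\<And>N. N > ?S \<Longrightarrow> ?Y $ N = 0" and IH2: "?Y $ ?S = (\<Prod>i<r. B i (s i))"
    using Suc by auto
  have Bz: "\<And>m. m > s r \<Longrightarrow> B r m = 0" using Suc.prems by auto
  have nth: "(\<Prod>i<Suc r. Abs_fps (B i)) $ N = (\<Sum>j=0..N. ?Y $ j * B r (N - j))" for N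
    by (simp add: fps_mult_nth)
  have zero: "?Y $ j * B r (N - j) = 0" if "j \<noteq> ?S" "N \<ge> ?S + s r" for j N
  proof (cases "j > ?S")
    case True then show ?thesis using IH1 by simp
  next
    case False
    then have "N - j > s r" using that by auto
    then show ?thesis using Bz by simp
  qed
  have A: "(\<Prod>i<Suc r. Abs_fps (B i)) $ N = 0" if N: "N > ?S + s r" for N
    unfolding nth
  proof (rule sum.neutral, intro ballI)
    fix j assume "j \<in> {0..N}"
    show "?Y $ j * B r (N - j) = 0"
    proof (cases "j = ?S")
      case True then have "N - j > s r" using N by auto
      then show ?thesis using Bz by simp
    next
      case False then show ?thesis using zero N by simp
    qed
  qed
  have "(\<Prod>i<Suc r. Abs_fps (B i)) $ (?S + s r) = (\<Sum>j\<in>{?S}. ?Y $ j * B r (?S + s r - j))"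
    unfolding nth
  proof (rule sum.mono_neutral_right)
    show "\<forall>i\<in>{0..?S + s r} - {?S}. ?Y $ i * B r (?S + s r - i) = 0" using zero by blast
  qed auto
  then have B: "(\<Prod>i<Suc r. Abs_fps (B i)) $ (?S + s r) = (\<Prod>i<Suc r. B i (s i))"
    using IH2 by simp
  show ?case using A B by simp
qed

lemma fall_zero: "m > k \<Longrightarrow> fall k m = 0"
  unfolding fall_def by (rule prod_zero) (auto intro!: bexI[of _ k])

lemma fall_fact: "m \<le> k \<Longrightarrow> fall k m * fact (k - m) = fact k"
proof (induction m)
  case 0 then show ?case by (simp add: fall_def)
next
  case (Suc m)
  have "k - m = Suc (k - Suc m)" using Suc.prems by simp
  then have "fact (k - m) = real (k - m) * fact (k - Suc m)" by (metis fact_Suc of_nat_Suc)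
  then show ?case using Suc by (simp add: fall_Suc mult_ac)
qed

lemma A_eq:
  fixes B :: "nat \<Rightarrow> real"
  assumes "\<forall>m>s. B m = 0"
  shows "Abs_fps (\<lambda>k. (\<Sum>m\<le>s. fall k m * (G ^ (k - m) * B m)) / fact k) = Abs_fps B * fps_exp G"
proof (rule fps_ext)
  fix k
  let ?t = "\<lambda>m. (if m \<le> k then B m * (G ^ (k - m) / fact (k - m)) else 0)"
  have "(\<Sum>m\<le>s. fall k m * (G ^ (k - m) * B m)) / fact k = (\<Sum>m\<le>s + k. ?t m)"
    unfolding sum_divide_distrib
  proof (rule sum.mono_neutral_cong_left)
    show "\<forall>i\<in>{..s + k} - {..s}. ?t i = 0" using assms by auto
    fix m assume "m \<in> {..s}"
    show "fall k m * (G ^ (k - m) * B m) / fact k = ?t m"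
    proof (cases "m \<le> k")
      case True
      have "fact k = fall k m * fact (k - m)" using fall_fact[OF True] by simp
      moreover have "fall k m \<noteq> 0" using fall_fact[OF True] by (metis fact_nonzero mult_zero_left)
      ultimately show ?thesis using True by (simp add: field_simps)
    next
      case False then show ?thesis by (simp add: fall_zero)
    qed
  qed auto
  also have "\<dots> = (\<Sum>m\<in>{0..k}. B m * (G ^ (k - m) / fact (k - m)))"
    by (rule sum.mono_neutral_cong_right) auto
  finally show "Abs_fps (\<lambda>k. (\<Sum>m\<le>s. fall k m * (G ^ (k - m) * B m)) / fact k) $ k = (Abs_fps B * fps_exp G) $ k"
    by (simp add: fps_mult_nth)
qed

theorem theorem1:
  fixes n r :: nat and I :: "real set" and f g :: "nat \<Rightarrow> real \<Rightarrow> real"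
    and s :: "nat \<Rightarrow> nat" and x :: real
  assumes "r \<ge> 1"
    and "open I" and "is_interval I"
    and "\<forall>i<r. has_deriv_of_order_on n (f i) I"
    and "\<forall>i<r. has_deriv_of_order_on n (g i) I"
    and "\<forall>y\<in>I. (\<Sum>i<r. g i y) = 0"
    and "(\<Sum>i<r. s i) \<le> n"
    and "x \<in> I"
  shows "(\<Sum>k\<in>multi_indices r n. real (multinom n r k) *
            (\<Prod>i<r. (deriv ^^ s i) (\<lambda>y. f i y * g i y ^ k i) x))
         = (if (\<Sum>i<r. s i) < n then 0
            else fact n * (\<Prod>i<r. f i x) * (\<Prod>i<r. deriv (g i) x ^ s i))"
proof -
  define B where "B i m = bb (f i) (g i) (s i) m x" for i m
  define G where "G i = g i x" for i
  define a where "a i k = (deriv ^^ s i) (\<lambda>y. f i y * g i y ^ k) x" for i k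
  have sle: "s i \<le> n" if "i < r" for i
    using assms(7) that by (metis lessThan_iff finite_lessThan member_le_sum le_trans zero_le)
  have a_eq: "a i k = (\<Sum>m\<le>s i. fall k m * (G i ^ (k - m) * B i m))" if "i < r" for i k
    using deriv_main[OF assms(2), of n "f i" "g i" "s i" k] assms(4,5,8) sle[OF that] that
    unfolding a_def G_def B_def by blast
  have Bz: "\<forall>m>s i. B i m = 0" for i by (simp add: B_def bb_zero)
  have "(\<Sum>k\<in>multi_indices r n. real (multinom n r k) *
            (\<Prod>i<r. (deriv ^^ s i) (\<lambda>y. f i y * g i y ^ k i) x))
      = (\<Sum>k\<in>multi_indices r n. fact n * (\<Prod>i<r. a i (k i) / fact (k i)))"
    by (intro sum.cong refl) (simp add: multinom_real a_def prod_dividef)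
  also have "\<dots> = fact n * (\<Prod>i<r. Abs_fps (\<lambda>k. a i k / fact k)) $ n"
    by (simp add: fps_prod_nth sum_distrib_left)
  also have "(\<Prod>i<r. Abs_fps (\<lambda>k. a i k / fact k)) = (\<Prod>i<r. Abs_fps (B i) * fps_exp (G i))"
    by (intro prod.cong refl) (simp add: a_eq A_eq Bz)
  also have "\<dots> = (\<Prod>i<r. Abs_fps (B i))"
  proof -
    have "(\<Sum>i<r. G i) = 0" using assms(6,8) by (simp add: G_def)
    then show ?thesis by (simp add: prod.distrib fps_exp_prod)
  qed
  finally have L: "(\<Sum>k\<in>multi_indices r n. real (multinom n r k) *
            (\<Prod>i<r. (deriv ^^ s i) (\<lambda>y. f i y * g i y ^ k i) x))
      = fact n * (\<Prod>i<r. Abs_fps (B i)) $ n" .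
  note P = prod_poly[of r s B]
  show ?thesis
  proof (cases "(\<Sum>i<r. s i) < n")
    case True then show ?thesis using L P Bz by simp
  next
    case False
    then have e: "n = (\<Sum>i<r. s i)" using assms(7) by simp
    have "(\<Prod>i<r. B i (s i)) = (\<Prod>i<r. f i x) * (\<Prod>i<r. deriv (g i) x ^ s i)"
      by (simp add: B_def bb_top prod.distrib)
    then show ?thesis using L P Bz False by (simp add: e[symmetric])
  qed
qed

end
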